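(* Let $n$ be a positive odd integer and let $x\in\mathbb{Z}$ with $\gcd(x(1-x),n)=1$. Then $$(-1)^{|\{1\le k<n/2:\ \{kx\}_n>k\}|}=\left(\frac{2x(1-x)}{n}\right),$$ $$(-1)^{|\{1\le k<n/2:\ \{kx\}_n>n/2\ \&\ \{k(1-x)\}_n>n/2\}|}=\left(\frac{2}{n}\right),$$ $$(-1)^{|\{1\le k<n/2:\ \{kx\}_n<n/2\ \&\ \{k(1-x)\}_n<n/2\}|}=\left(\frac{2x(x-1)}{n}\right),$$ and $$(-1)^{|\{1\le k<n/2:\ \{kx\}_n>n/2>\{k(1-x)\}_n\}|}=\left(\frac{2x}{n}\right).$$
   Context: For a positive integer $n$ and an integer $y$, $\{y\}_n$ denotes the unique integer $r\in\{0,1,\dots,n-1\}$ with $r\equiv y\pmod n$. $\left(\frac{\cdot}{n}\right)$ denotes the Jacobi symbol. *)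

theory Defs
  imports "HOL-Number_Theory.Number_Theory"
begin

definition Jacobi :: "int \<Rightarrow> int \<Rightarrow> int" where
  "Jacobi a n = (\<Prod>p\<in>prime_factors n. Legendre a p ^ multiplicity p n)"

definition lres :: "int \<Rightarrow> int \<Rightarrow> int" where
  "lres n y = y mod n"

end

theory Submission
  imports Defs
begin


definition hh :: "int \<Rightarrow> int" where "hh n = (n - 1) div 2"
definition eps :: "int \<Rightarrow> int \<Rightarrow> int" where
  "eps n t = (if t mod n \<le> hh n then 1 else -1)"
definition phi :: "int \<Rightarrow> int \<Rightarrow> int" where
  "phi n t = (if t mod n \<le> hh n then t mod n else n - t mod n)"
definition G :: "int \<Rightarrow> int \<Rightarrow> int" where
  "G n a = (\<Prod>k\<in>{1..hh n}. eps n (k * a))"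
definition mu :: "int \<Rightarrow> int \<Rightarrow> nat" where
  "mu n a = card {k\<in>{1..hh n}. k * a mod n > hh n}"

lemma prod_sign: "finite S \<Longrightarrow> (\<Prod>k\<in>S. (if P k then -1 else 1)) = (-1::int) ^ card {k\<in>S. P k}"
proof -
  assume "finite S"
  have "(\<Prod>k\<in>S. (if P k then -1 else (1::int))) = (\<Prod>k\<in>S \<inter> {k. P k}. -1) * (\<Prod>k\<in>S - {k. P k}. 1)"
    using prod.If_cases[OF `finite S`, of P "\<lambda>_. -1" "\<lambda>_. 1"] by simp
  also have "\<dots> = (-1) ^ card (S \<inter> {k. P k})" by simp
  finally show ?thesis by (simp add: Int_def)
qed

lemma G_mu: "G n a = (-1) ^ mu n a"
proof -
  have "G n a = (\<Prod>k\<in>{1..hh n}. (if k * a mod n > hh n then -1 else 1))"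
    unfolding G_def eps_def by (intro prod.cong) auto
  also have "\<dots> = (-1) ^ mu n a" unfolding mu_def by (rule prod_sign) simp
  finally show ?thesis .
qed

lemma G_pm: "G n a = 1 \<or> G n a = -1"
  unfolding G_mu by (cases "even (mu n a)") auto

lemma G_sq: "G n a * G n a = 1"
  using G_pm[of n a] by auto

lemma G_mod: "G n (a mod n) = G n a"
  unfolding G_def eps_def by (simp add: mod_mult_right_eq)

lemma hh_n: "odd n \<Longrightarrow> n = 2 * hh n + 1"
  unfolding hh_def by (auto elim!: oddE)




lemma dvd_small_zero: "(n::int) dvd d \<Longrightarrow> \<bar>d\<bar> < n \<Longrightarrow> d = 0"
  using dvd_imp_le_int[of d n] by fastforce


lemma hh_lt: "odd n \<Longrightarrow> n > 0 \<Longrightarrow> hh n < n"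
  using hh_n[of n] by linarith

lemma mod_nz: "coprime a n \<Longrightarrow> t mod n \<noteq> 0 \<Longrightarrow> (a * t) mod (n::int) \<noteq> 0"
  by (metis coprime_commute coprime_dvd_mult_right_iff dvd_eq_mod_eq_0)

lemma mod_nz_k: "coprime a n \<Longrightarrow> 1 \<le> k \<Longrightarrow> k < (n::int) \<Longrightarrow> (k * a) mod n \<noteq> 0"
proof
  assume c: "coprime a n" and k: "1 \<le> k" "k < n" and m: "(k * a) mod n = 0"
  then have "n dvd k * a" by auto
  then have "n dvd k" using c by (metis coprime_commute coprime_dvd_mult_left_iff)
  then show False using k dvd_small_zero[of n k] by auto
qed

lemma phi_range: "odd n \<Longrightarrow> n > 0 \<Longrightarrow> t mod n \<noteq> 0 \<Longrightarrow> phi n t \<in> {1..hh n}"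
proof -
  assume n: "odd n" "n > 0" and t: "t mod n \<noteq> 0"
  have "0 \<le> t mod n" "t mod n < n" using n by simp_all
  then show ?thesis using hh_n[OF n(1)] t unfolding phi_def by auto
qed

lemma phi_inj:
  assumes n: "odd n" "n > 0" and c: "coprime b n"
    and k: "k \<in> {1..hh n}" and k': "k' \<in> {1..hh n}" and e: "phi n (k * b) = phi n (k' * b)"
  shows "k = k'"
proof -
  have hn: "n = 2 * hh n + 1" using hh_n n by blast
  show ?thesis
  proof (cases "(k * b) mod n \<le> hh n \<longleftrightarrow> (k' * b) mod n \<le> hh n")
    case True
    then have "(k * b) mod n = (k' * b) mod n" using e unfolding phi_def by (auto split: if_splits)
    then have "n dvd (k - k') * b" by (metis mod_eq_dvd_iff left_diff_distrib)
    then have "n dvd (k - k')" using c by (metis coprime_commute coprime_dvd_mult_left_iff)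
    then show ?thesis using dvd_small_zero[of n "k - k'"] k k' hn by auto
  next
    case False
    then have "(k * b) mod n + (k' * b) mod n = n" using e unfolding phi_def by (auto split: if_splits)
    then have "(k * b + k' * b) mod n = 0" by (metis mod_add_eq mod_self)
    then have "n dvd (k + k') * b" by (simp add: distrib_right mod_0_imp_dvd)
    then have "n dvd (k + k')" using c by (metis coprime_commute coprime_dvd_mult_left_iff)
    then show ?thesis using dvd_small_zero[of n "k + k'"] k k' hn by auto
  qed
qed

lemma phi_bij:
  assumes n: "odd n" "n > 0" and c: "coprime b n"
  shows "bij_betw (\<lambda>k. phi n (k * b)) {1..hh n} {1..hh n}"
proof -
  have hn: "n = 2 * hh n + 1" using hh_n n by blast
  have sub: "(\<lambda>k. phi n (k * b)) ` {1..hh n} \<subseteq> {1..hh n}"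
  proof
    fix y assume "y \<in> (\<lambda>k. phi n (k * b)) ` {1..hh n}"
    then obtain k where k: "k \<in> {1..hh n}" "y = phi n (k * b)" by auto
    have "(k * b) mod n \<noteq> 0" using mod_nz_k[OF c, of k] k hn by auto
    then show "y \<in> {1..hh n}" using phi_range[OF n] k by auto
  qed
  have inj: "inj_on (\<lambda>k. phi n (k * b)) {1..hh n}"
    using phi_inj[OF n c] by (auto simp: inj_on_def)
  have "(\<lambda>k. phi n (k * b)) ` {1..hh n} = {1..hh n}"
    using endo_inj_surj[OF _ sub inj] by simp
  then show ?thesis using inj by (simp add: bij_betw_def)
qed

lemma eps_neg:
  assumes n: "odd n" "n > 0" and u: "u mod n \<noteq> 0"
  shows "eps n (- u) = - eps n u"
proof -
  have hn: "n = 2 * hh n + 1" using hh_n n by blast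
  have "(- u) mod n = n - u mod n" using u by (simp add: zmod_zminus1_eq_if)
  then show ?thesis unfolding eps_def using hn by auto
qed

lemma eps_mod: "eps n (t mod n) = eps n t"
  unfolding eps_def by simp

lemma eps_mult:
  assumes n: "odd n" "n > 0" and c: "coprime a n" and t: "t mod n \<noteq> 0"
  shows "eps n (a * t) = eps n t * eps n (a * phi n t)"
proof (cases "t mod n \<le> hh n")
  case True
  then have "phi n t = t mod n" unfolding phi_def by simp
  then have "eps n (a * phi n t) = eps n (a * t)"
    unfolding eps_def by (simp add: mod_mult_right_eq)
  then show ?thesis using True unfolding eps_def by simp
next
  case False
  have "(a * phi n t) mod n = (- (a * t)) mod n"
  proof -
    have "a * phi n t = (- (a * (t mod n))) + a * n" using False unfolding phi_def by (simp add: algebra_simps)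
    then have "(a * phi n t) mod n = (- (a * (t mod n))) mod n" by (simp only: mod_mult_self1 mod_mult_self2 mod_mult_self3 mod_mult_self4)
    also have "\<dots> = (- (a * t)) mod n" by (metis mod_minus_eq mod_mult_right_eq)
    finally show ?thesis .
  qed
  then have "eps n (a * phi n t) = eps n (- (a * t))" by (metis eps_mod)
  also have "\<dots> = - eps n (a * t)" using eps_neg[OF n mod_nz[OF c t]] .
  finally show ?thesis using False unfolding eps_def by simp
qed

lemma G_mult:
  assumes n: "odd n" "n > 0" and ca: "coprime a n" and cb: "coprime b n"
  shows "G n (a * b) = G n a * G n b"
proof -
  have hn: "n = 2 * hh n + 1" using hh_n n by blast
  have "G n (a * b) = (\<Prod>k\<in>{1..hh n}. eps n (a * (k * b)))"
    unfolding G_def by (simp add: algebra_simps)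
  also have "\<dots> = (\<Prod>k\<in>{1..hh n}. eps n (k * b) * eps n (phi n (k * b) * a))"
  proof (intro prod.cong refl)
    fix k assume k: "k \<in> {1..hh n}"
    have "(k * b) mod n \<noteq> 0" using mod_nz_k[OF cb, of k] k hn by auto
    then have e: "eps n (a * (k * b)) = eps n (k * b) * eps n (a * phi n (k * b))"
      by (rule eps_mult[OF n ca])
    then show "eps n (a * (k * b)) = eps n (k * b) * eps n (phi n (k * b) * a)"
      by (metis mult.commute)
  qed
  also have "\<dots> = G n b * (\<Prod>k\<in>{1..hh n}. eps n (phi n (k * b) * a))"
    unfolding G_def by (simp add: prod.distrib)
  also have "(\<Prod>k\<in>{1..hh n}. eps n (phi n (k * b) * a)) = G n a"
    unfolding G_def using prod.reindex_bij_betw[OF phi_bij[OF n cb], of "\<lambda>j. eps n (j * a)"] by simp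
  finally show ?thesis by simp
qed




definition FF :: "int \<Rightarrow> int \<Rightarrow> int" where
  "FF n a = (\<Sum>k\<in>{1..hh n}. (k * a) div n)"
definition TT :: "int \<Rightarrow> int" where
  "TT n = (\<Sum>k\<in>{1..hh n}. k)"

lemma eisenstein:
  assumes n: "odd n" "n > 0" and c: "coprime a n"
  shows "even (int (mu n a) + FF n a + (a - 1) * TT n)"
proof -
  have hn: "n = 2 * hh n + 1" using hh_n n by blast
  define K where "K = {1..hh n}"
  define L where "L = {k\<in>K. (k * a) mod n > hh n}"
  define S where "S = (\<Sum>k\<in>L. (k * a) mod n)"
  have fK: "finite K" unfolding K_def by simp
  have e1: "a * TT n = n * FF n a + (\<Sum>k\<in>K. (k * a) mod n)"
  proof -
    have "a * TT n = (\<Sum>k\<in>K. k * a)" unfolding TT_def K_def by (simp add: sum_distrib_left mult.commute)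
    also have "\<dots> = (\<Sum>k\<in>K. n * ((k * a) div n) + (k * a) mod n)"
      by (intro sum.cong refl) (metis mult_div_mod_eq)
    also have "\<dots> = n * FF n a + (\<Sum>k\<in>K. (k * a) mod n)"
      unfolding FF_def K_def sum.distrib sum_distrib_left ..
    finally show ?thesis .
  qed
  have e2: "(\<Sum>k\<in>K. (k * a) mod n) = (\<Sum>k\<in>K. phi n (k * a)) + (\<Sum>k\<in>L. 2 * ((k * a) mod n) - n)"
  proof -
    have "(\<Sum>k\<in>K. (k * a) mod n) = (\<Sum>k\<in>K. phi n (k * a) + (if (k * a) mod n > hh n then 2 * ((k * a) mod n) - n else 0))"
      by (intro sum.cong refl) (auto simp: phi_def)
    also have "\<dots> = (\<Sum>k\<in>K. phi n (k * a)) + (\<Sum>k\<in>L. 2 * ((k * a) mod n) - n)"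
      unfolding L_def using sum.inter_filter[OF fK, of "\<lambda>k. 2 * ((k * a) mod n) - n" "\<lambda>k. (k * a) mod n > hh n"]
      by (simp add: sum.distrib)
    finally show ?thesis .
  qed
  have e3: "(\<Sum>k\<in>K. phi n (k * a)) = TT n"
    unfolding TT_def K_def using sum.reindex_bij_betw[OF phi_bij[OF n c], of "\<lambda>j. j"] by simp
  have e4: "(\<Sum>k\<in>L. 2 * ((k * a) mod n) - n) = 2 * S - n * int (mu n a)"
    unfolding S_def mu_def L_def K_def by (simp add: sum_subtractf sum_distrib_left)
  have eq: "a * TT n = n * FF n a + TT n + 2 * S - n * int (mu n a)"
    using e1 e2 e3 e4 by simp
  have "int (mu n a) + FF n a + (a - 1) * TT n = (n + 1) * FF n a + 2 * S - (n - 1) * int (mu n a)"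
  proof -
    have "(a - 1) * TT n = a * TT n - TT n" "(n + 1) * FF n a = n * FF n a + FF n a"
      "(n - 1) * int (mu n a) = n * int (mu n a) - int (mu n a)" by (simp_all add: algebra_simps)
    then show ?thesis using eq by linarith
  qed
  then show ?thesis using n(1) by simp
qed

lemma div_indicator:
  assumes "0 \<le> q" "q \<le> M"
  shows "(\<Sum>j\<in>{1..M}. (if j \<le> q then 1 else 0)) = (q::int)"
proof -
  have "(\<Sum>j\<in>{1..M}. (if j \<le> q then 1 else (0::int))) = (\<Sum>j\<in>{j\<in>{1..M}. j \<le> q}. 1)"
    using sum.inter_filter[of "{1..M}" "\<lambda>_. (1::int)" "\<lambda>j. j \<le> q"] by simp
  also have "{j\<in>{1..M}. j \<le> q} = {1..q}" using assms by auto
  finally show ?thesis using assms by simp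
qed

lemma lattice:
  assumes m: "odd m" "m > 0" and n: "odd n" "n > 0" and c: "coprime m n"
  shows "FF n m + FF m n = hh n * hh m"
proof -
  have hn: "n = 2 * hh n + 1" using hh_n n by blast
  have hm: "m = 2 * hh m + 1" using hh_n m by blast
  have d1: "(k * m) div n = (\<Sum>j\<in>{1..hh m}. (if j * n \<le> k * m then 1 else 0))"
    if k: "k \<in> {1..hh n}" for k
  proof -
    define q where "q = (k * m) div n"
    have q0: "0 \<le> q" unfolding q_def using k m n by (simp add: pos_imp_zdiv_nonneg_iff)
    have "q * n \<le> k * m" unfolding q_def using n by (metis mult.commute mult_div_mod_eq le_add_same_cancel1 pos_mod_sign)
    moreover have "2 * k * m < n * m" using k hn m by (simp add: mult_strict_right_mono)
    ultimately have "2 * q * n < n * m" by linarith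
    then have "2 * q < m" using n by (simp add: mult.commute)
    then have qm: "q \<le> hh m" using hm by linarith
    have iff: "j * n \<le> k * m \<longleftrightarrow> j \<le> q" for j
    proof
      assume "j * n \<le> k * m"
      then have "(j * n) div n \<le> (k * m) div n" using n zdiv_mono1[of "j * n" "k * m" n] by linarith
      then show "j \<le> q" unfolding q_def using n by simp
    next
      assume "j \<le> q"
      then have "j * n \<le> q * n" using n by simp
      also have "q * n \<le> k * m" unfolding q_def using n by (metis mult.commute mult_div_mod_eq le_add_same_cancel1 pos_mod_sign)
      finally show "j * n \<le> k * m" .
    qed
    show ?thesis unfolding iff using div_indicator[OF q0 qm] q_def by simp
  qed
  have d2: "(j * n) div m = (\<Sum>k\<in>{1..hh n}. (if k * m \<le> j * n then 1 else 0))"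
    if j: "j \<in> {1..hh m}" for j
  proof -
    define q where "q = (j * n) div m"
    have q0: "0 \<le> q" unfolding q_def using j m n by (simp add: pos_imp_zdiv_nonneg_iff)
    have "q * m \<le> j * n" unfolding q_def using m by (metis mult.commute mult_div_mod_eq le_add_same_cancel1 pos_mod_sign)
    moreover have "2 * j * n < m * n" using j hm n by (simp add: mult_strict_right_mono)
    ultimately have "2 * q * m < m * n" by linarith
    then have "2 * q < n" using m by (simp add: mult.commute)
    then have qn: "q \<le> hh n" using hn by linarith
    have iff: "k * m \<le> j * n \<longleftrightarrow> k \<le> q" for k
    proof
      assume "k * m \<le> j * n"
      then have "(k * m) div m \<le> (j * n) div m" using m zdiv_mono1[of "k * m" "j * n" m] by linarith
      then show "k \<le> q" unfolding q_def using m by simp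
    next
      assume "k \<le> q"
      then have "k * m \<le> q * m" using m by simp
      also have "q * m \<le> j * n" unfolding q_def using m by (metis mult.commute mult_div_mod_eq le_add_same_cancel1 pos_mod_sign)
      finally show "k * m \<le> j * n" .
    qed
    show ?thesis unfolding iff using div_indicator[OF q0 qn] q_def by simp
  qed
  have "FF n m + FF m n = (\<Sum>k\<in>{1..hh n}. \<Sum>j\<in>{1..hh m}. (if j * n \<le> k * m then 1 else 0))
        + (\<Sum>j\<in>{1..hh m}. \<Sum>k\<in>{1..hh n}. (if k * m \<le> j * n then 1 else 0))"
    unfolding FF_def using d1 d2 by simp
  also have "\<dots> = (\<Sum>k\<in>{1..hh n}. \<Sum>j\<in>{1..hh m}. (if j * n \<le> k * m then 1 else 0) + (if k * m \<le> j * n then 1 else 0))"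
    by (simp add: sum.swap[of _ "{1..hh m}"] sum.distrib)
  also have "\<dots> = (\<Sum>k\<in>{1..hh n}. \<Sum>j\<in>{1..hh m}. (1::int))"
  proof (intro sum.cong refl)
    fix k j assume k: "k \<in> {1..hh n}" and j: "j \<in> {1..hh m}"
    have "j * n \<noteq> k * m"
    proof
      assume "j * n = k * m"
      then have "n dvd k * m" by (metis dvd_triv_right)
      then have "n dvd k" using c by (metis coprime_commute coprime_dvd_mult_left_iff)
      then show False using dvd_small_zero[of n k] k hn by auto
    qed
    then show "(if j * n \<le> k * m then 1 else 0) + (if k * m \<le> j * n then 1 else 0) = (1::int)" by auto
  qed
  also have "\<dots> = hh n * hh m"
  proof -
    have "hh n \<ge> 0" "hh m \<ge> 0" using hn hm n m by linarith+
    then show ?thesis by simp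
  qed
  finally show ?thesis .
qed




definition sg :: "int \<Rightarrow> int" where "sg x = (if even x then 1 else -1)"

lemma sg_add: "sg x * sg y = sg (x + y)"
  unfolding sg_def by auto

lemma G_sg: "G n a = sg (int (mu n a))"
  unfolding G_mu sg_def by (auto simp: neg_one_even_power neg_one_odd_power)

lemma G_recip:
  assumes m: "odd m" "m > 0" and n: "odd n" "n > 0" and c: "coprime m n"
  shows "G n m * G m n = sg (hh n * hh m)"
proof -
  have e1: "even (int (mu n m) + FF n m + (m - 1) * TT n)" by (rule eisenstein[OF n c])
  have e2: "even (int (mu m n) + FF m n + (n - 1) * TT m)"
    by (rule eisenstein[OF m]) (simp add: c coprime_commute)
  have o1: "even ((m - 1) * TT n)" "even ((n - 1) * TT m)" using m n by simp_all
  have "even (int (mu n m) + FF n m)" using e1 o1 by (metis even_add)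
  moreover have "even (int (mu m n) + FF m n)" using e2 o1 by (metis even_add)
  moreover have "(int (mu n m) + int (mu m n)) - hh n * hh m
     = (int (mu n m) + FF n m) + (int (mu m n) + FF m n) - 2 * (FF n m + FF m n)"
    unfolding lattice[OF m n c, symmetric] by (simp add: algebra_simps)
  ultimately have "even ((int (mu n m) + int (mu m n)) - hh n * hh m)"
  proof -
    assume ev1: "even (int (mu n m) + FF n m)" and ev2: "even (int (mu m n) + FF m n)"
      and eq: "(int (mu n m) + int (mu m n)) - hh n * hh m
     = (int (mu n m) + FF n m) + (int (mu m n) + FF m n) - 2 * (FF n m + FF m n)"
    from ev1 obtain u where u: "int (mu n m) + FF n m = 2 * u" by (rule evenE)
    from ev2 obtain v where v: "int (mu m n) + FF m n = 2 * v" by (rule evenE)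
    have "(int (mu n m) + int (mu m n)) - hh n * hh m = 2 * (u + v - (FF n m + FF m n))"
      using eq u v by (smt (verit))
    then show ?thesis by simp
  qed
  then have "sg (int (mu n m) + int (mu m n)) = sg (hh n * hh m)"
    unfolding sg_def by (metis even_add diff_add_cancel)
  then show ?thesis unfolding G_sg sg_add .
qed

lemma sg_hh_mult:
  assumes "odd m" "odd n"
  shows "sg (hh (m * n) * b) * sg (hh m * b) * sg (hh n * b) = 1"
proof -
  obtain p where p: "m = 2 * p + 1" using assms by (metis oddE)
  obtain q where q: "n = 2 * q + 1" using assms by (metis oddE)
  have "m * n = 2 * (2 * p * q + p + q) + 1" using p q by (simp add: algebra_simps)
  then have "hh (m * n) = 2 * p * q + p + q" unfolding hh_def by simp
  moreover have "hh m = p" "hh n = q" using p q unfolding hh_def by simp_all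
  ultimately have "hh (m * n) * b + hh m * b + hh n * b = 2 * ((p * q + p + q) * b)"
    by (simp add: algebra_simps)
  then show ?thesis unfolding sg_add by (simp add: sg_def)
qed

lemma flip: "(x::int) * x = 1 \<Longrightarrow> x * y = s \<Longrightarrow> y = s * x"
proof -
  assume a: "x * x = 1" "x * y = s"
  have "y = (x * x) * y" using a by simp
  also have "\<dots> = s * x" using a(2) by (simp add: algebra_simps)
  finally show ?thesis .
qed

lemma G_mult_mod:
  assumes m: "odd m" "m > 0" and n: "odd n" "n > 0" and c: "coprime a (m * n)"
  shows "G (m * n) a = G m a * G n a"
proof -
  define N where "N = m * n"
  have N: "odd N" "N > 0" using m n unfolding N_def by simp_all
  define b where "b = (if odd (a mod N) then a mod N else a mod N + N)"
  have b0: "b > 0"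
  proof -
    have h0: "0 \<le> a mod N" using N by simp
    show ?thesis
    proof (cases "odd (a mod N)")
      case True
      then have "a mod N \<noteq> 0" by auto
      moreover have "b = a mod N" using True b_def by simp
      ultimately show ?thesis using h0 by linarith
    next
      case False
      then have "b = a mod N + N" using b_def by simp
      then show ?thesis using h0 N by linarith
    qed
  qed
  have bodd: "odd b" unfolding b_def using N by auto
  have bN: "b mod N = a mod N" unfolding b_def by simp
  have bm: "b mod m = a mod m" "b mod n = a mod n"
  proof -
    have "b mod m = (a mod N) mod m" "b mod n = (a mod N) mod n" unfolding b_def N_def by auto
    moreover have "(a mod N) mod m = a mod m" "(a mod N) mod n = a mod n"
      unfolding N_def by (simp_all add: mod_mod_cancel)
    ultimately show "b mod m = a mod m" "b mod n = a mod n" by simp_all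
  qed
  have cN: "coprime b N" using c bN unfolding N_def by (metis coprime_mod_left_iff N(2) N_def less_irrefl)
  have cm: "coprime b m" "coprime b n" using cN unfolding N_def by simp_all
  have GN: "G N a = G N b" using bN G_mod by metis
  have Gm: "G m a = G m b" "G n a = G n b" using bm G_mod by metis+
  have r1: "G N b * G b N = sg (hh N * hh b)"
    by (rule G_recip[OF bodd b0 N]) (simp add: cN)
  have r2: "G m b * G b m = sg (hh m * hh b)"
    by (rule G_recip[OF bodd b0 m]) (simp add: cm)
  have r3: "G n b * G b n = sg (hh n * hh b)"
    by (rule G_recip[OF bodd b0 n]) (simp add: cm)
  have mb: "G b N = G b m * G b n"
    unfolding N_def by (rule G_mult[OF bodd b0]) (simp_all add: cm coprime_commute)
  have s: "sg (hh N * hh b) * sg (hh m * hh b) * sg (hh n * hh b) = 1"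
    unfolding N_def by (rule sg_hh_mult[OF m(1) n(1)])
  have r1': "G b N * G N b = sg (hh N * hh b)" using r1 by (simp add: mult.commute)
  have "G N b = sg (hh N * hh b) * G b N" by (rule flip[OF G_sq[of b N] r1'])
  also have "\<dots> = sg (hh N * hh b) * (sg (hh m * hh b) * G m b) * (sg (hh n * hh b) * G n b)"
    using mb flip[OF G_sq[of m b] r2] flip[OF G_sq[of n b] r3] by (simp add: mult.assoc)
  also have "\<dots> = (sg (hh N * hh b) * sg (hh m * hh b) * sg (hh n * hh b)) * (G m b * G n b)"
    by (simp add: algebra_simps)
  also have "\<dots> = G m b * G n b" using s by simp
  finally show ?thesis using GN Gm unfolding N_def by simp
qed




context GAUSS
begin

lemma card_E_mu: "card E = mu (int p) a"
proof -
  have A: "A = {1..hh (int p)}" unfolding A_def hh_def by auto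
  have inj: "inj_on (\<lambda>k. k * a mod int p) A"
    using comp_inj_on[OF inj_on_xa_A SR_B_inj[unfolded B_def]] by (simp add: o_def)
  have E: "E = (\<lambda>k. k * a mod int p) ` {k\<in>A. k * a mod int p > hh (int p)}"
    unfolding E_def C_def B_def hh_def by auto
  have "card E = card {k\<in>A. k * a mod int p > hh (int p)}"
    unfolding E by (rule card_image) (rule inj_on_subset[OF inj], auto)
  then show ?thesis unfolding mu_def A .
qed

end

lemma Legendre_mod: "Legendre (a mod p) p = Legendre a p"
  unfolding Legendre_def QuadRes_def cong_def by simp

lemma G_Legendre:
  assumes p: "prime p" "p > 2" and a: "\<not> p dvd a"
  shows "G p a = Legendre a p"
proof -
  define a' where "a' = a mod p"
  have p0: "p > 0" using p by simp
  have a'0: "0 < a'" unfolding a'_def using a p0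
    by (metis dvd_eq_mod_eq_0 le_less pos_mod_sign)
  have "GAUSS (nat p) a'"
  proof
    show "prime (nat p)" using p by (simp add: prime_nat_iff_prime)
    show "2 < nat p" using p by simp
    show "[a' \<noteq> 0] (mod int (nat p))" unfolding a'_def cong_def using a p0 by (simp add: dvd_eq_mod_eq_0)
    show "0 < a'" by fact
  qed
  then interpret GA: GAUSS "nat p" a' .
  have "G p a = G p a'" unfolding a'_def by (simp add: G_mod)
  also have "\<dots> = (-1) ^ mu p a'" by (rule G_mu)
  also have "\<dots> = (-1) ^ card GA.E" using GA.card_E_mu p0 by simp
  also have "\<dots> = Legendre a' (int (nat p))" using GA.gauss_lemma by simp
  also have "\<dots> = Legendre a p" unfolding a'_def using p0 by (simp add: Legendre_mod)
  finally show ?thesis .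
qed

lemma J_1: "Jacobi a 1 = 1"
  unfolding Jacobi_def by simp

lemma J_prime: "prime p \<Longrightarrow> Jacobi a p = Legendre a p"
proof -
  assume p: "prime p"
  have "multiplicity p p = 1" by (rule multiplicity_prime) (rule prime_imp_prime_elem[OF p])
  then show ?thesis unfolding Jacobi_def using p by (simp add: prime_prime_factors)
qed

lemma J_mult:
  assumes m: "m > 0" and n: "n > 0"
  shows "Jacobi a (m * n) = Jacobi a m * Jacobi a n"
proof -
  define U where "U = prime_factors m \<union> prime_factors n"
  have fU: "finite U" unfolding U_def by simp
  have pf: "prime_factors (m * n) = U" unfolding U_def using m n by (simp add: prime_factors_product)
  have "Jacobi a (m * n) = (\<Prod>p\<in>U. Legendre a p ^ (multiplicity p m + multiplicity p n))"
    unfolding Jacobi_def pf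
  proof (intro prod.cong refl)
    fix p assume "p \<in> U"
    then have "prime p" unfolding U_def by auto
    then have "prime_elem p" by (rule prime_imp_prime_elem)
    then show "Legendre a p ^ multiplicity p (m * n) = Legendre a p ^ (multiplicity p m + multiplicity p n)"
      using m n by (simp add: prime_elem_multiplicity_mult_distrib)
  qed
  also have "\<dots> = (\<Prod>p\<in>U. Legendre a p ^ multiplicity p m) * (\<Prod>p\<in>U. Legendre a p ^ multiplicity p n)"
    by (simp add: power_add prod.distrib)
  also have "(\<Prod>p\<in>U. Legendre a p ^ multiplicity p m) = Jacobi a m"
    unfolding Jacobi_def
  proof (rule prod.mono_neutral_right[OF fU])
    show "prime_factors m \<subseteq> U" unfolding U_def by auto
    show "\<forall>i\<in>U - prime_factors m. Legendre a i ^ multiplicity i m = 1"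
    proof
      fix i assume i: "i \<in> U - prime_factors m"
      then have "prime i" "\<not> i dvd m" unfolding U_def using m by (auto simp: in_prime_factors_iff)
      then have "multiplicity i m = 0" by (simp add: not_dvd_imp_multiplicity_0)
      then show "Legendre a i ^ multiplicity i m = 1" by simp
    qed
  qed
  also have "(\<Prod>p\<in>U. Legendre a p ^ multiplicity p n) = Jacobi a n"
    unfolding Jacobi_def
  proof (rule prod.mono_neutral_right[OF fU])
    show "prime_factors n \<subseteq> U" unfolding U_def by auto
    show "\<forall>i\<in>U - prime_factors n. Legendre a i ^ multiplicity i n = 1"
    proof
      fix i assume i: "i \<in> U - prime_factors n"
      then have "prime i" "\<not> i dvd n" unfolding U_def using n by (auto simp: in_prime_factors_iff)
      then have "multiplicity i n = 0" by (simp add: not_dvd_imp_multiplicity_0)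
      then show "Legendre a i ^ multiplicity i n = 1" by simp
    qed
  qed
  finally show ?thesis .
qed

lemma G_Jacobi:
  assumes "odd n" "n > 0" "coprime a n"
  shows "G n a = Jacobi a n"
  using assms
proof (induction "nat n" arbitrary: n rule: less_induct)
  case less
  show ?case
  proof (cases "n = 1")
    case True
    then show ?thesis by (simp add: J_1 G_def hh_def)
  next
    case False
    then have "\<not> is_unit n" using less.prems by auto
    then obtain p where p: "p dvd n" "prime p" using prime_divisor_exists[of n] less.prems by auto
    have p0: "p > 0" using p by (simp add: prime_gt_0_int)
    define q where "q = n div p"
    have nq: "n = p * q" unfolding q_def using p by simp
    have q0: "q > 0" using nq less.prems p0 by (metis pos_imp_zdiv_pos_iff q_def zdvd_imp_le p(1))
    have podd: "odd p" using p(1) less.prems(1) by (meson dvd_trans)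
    have qodd: "odd q" using nq less.prems(1) by simp
    have "p \<noteq> 2" using podd by auto
    then have p2: "p > 2" using prime_ge_2_int[OF p(2)] by linarith
    have "p > 1" using p2 by simp
    then have qn: "q < n" using nq q0 by simp
    have cq: "coprime a q" using less.prems(3) nq by simp
    have cp: "coprime a p" using less.prems(3) nq by simp
    have pa: "\<not> p dvd a"
    proof
      assume "p dvd a"
      then have "is_unit p" using cp by (metis coprime_common_divisor dvd_refl)
      then show False using p(2) by (metis not_prime_unit)
    qed
    have IH: "G q a = Jacobi a q" using less.hyps[of q] qn q0 qodd cq by simp
    have "G n a = G p a * G q a" unfolding nq by (rule G_mult_mod[OF podd p0 qodd q0]) (use less.prems nq in simp)
    also have "\<dots> = Legendre a p * Jacobi a q" using G_Legendre[OF p(2) p2 pa] IH by simp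
    also have "\<dots> = Jacobi a n" unfolding nq using J_mult[OF p0 q0] J_prime[OF p(2)] by simp
    finally show ?thesis .
  qed
qed




lemma pow_sg: "(-1::int) ^ k = sg (int k)"
  unfolding sg_def by (auto simp: neg_one_even_power neg_one_odd_power)

lemma sg_diff: "sg (x - y) = sg x * sg y"
  unfolding sg_def by auto

lemma sg_sq: "sg x * sg x = 1"
  unfolding sg_def by auto

lemma sg_cong: "even (x - y) \<Longrightarrow> sg x = sg y"
  unfolding sg_def by (metis diff_add_cancel even_add)

lemma G_minus1:
  assumes n: "odd n" "n > 0"
  shows "G n (-1) = sg (hh n)"
proof -
  have hn: "n = 2 * hh n + 1" using hh_n n by blast
  have "{k\<in>{1..hh n}. k * (-1) mod n > hh n} = {1..hh n}"
  proof -
    have "k * (-1) mod n = n - k" if "k \<in> {1..hh n}" for k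
    proof -
      have "(n - k) mod n = (- k) mod n" using mod_add_self2[of "- k" n] by simp
      then have "k * (-1) mod n = (n - k) mod n" by simp
      also have "\<dots> = n - k" using that hn by (intro mod_pos_pos_trivial) auto
      finally show ?thesis .
    qed
    then show ?thesis using hn by auto
  qed
  then have "mu n (-1) = card {1..hh n}" unfolding mu_def by simp
  moreover have "hh n \<ge> 0" using hn n by linarith
  ultimately have "int (mu n (-1)) = hh n" by simp
  then show ?thesis unfolding G_sg by simp
qed

lemma FF_2:
  assumes n: "odd n" "n > 0"
  shows "FF n 2 = 0"
proof -
  have hn: "n = 2 * hh n + 1" using hh_n n by blast
  show ?thesis unfolding FF_def
    by (rule sum.neutral) (use hn in \<open>auto intro: div_pos_pos_trivial\<close>)
qed

theorem main:
  fixes n x :: int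
  assumes n: "n > 0" "odd n" and g: "gcd (x * (1 - x)) n = 1"
  shows "((-1::int) ^ card {k::int. 1 \<le> k \<and> 2 * k < n \<and> lres n (k * x) > k}
           = Jacobi (2 * x * (1 - x)) n) \<and>
         ((-1::int) ^ card {k::int. 1 \<le> k \<and> 2 * k < n \<and>
             2 * lres n (k * x) > n \<and> 2 * lres n (k * (1 - x)) > n}
           = Jacobi 2 n) \<and>
         ((-1::int) ^ card {k::int. 1 \<le> k \<and> 2 * k < n \<and>
             2 * lres n (k * x) < n \<and> 2 * lres n (k * (1 - x)) < n}
           = Jacobi (2 * x * (x - 1)) n) \<and>
         ((-1::int) ^ card {k::int. 1 \<le> k \<and> 2 * k < n \<and>
             2 * lres n (k * x) > n \<and> n > 2 * lres n (k * (1 - x))}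
           = Jacobi (2 * x) n)"
proof -
  have n': "odd n" "n > 0" using n by auto
  have hn: "n = 2 * hh n + 1" using hh_n n by blast
  have h0: "hh n \<ge> 0" using hn n by linarith
  have cxy: "coprime (x * (1 - x)) n" using g by (simp add: coprime_iff_gcd_eq_1)
  have cx: "coprime x n" and cy: "coprime (1 - x) n" using cxy by simp_all
  have c2: "coprime 2 n" using n by simp
  have cm: "coprime (-1) n" by simp
  define K where "K = {1..hh n}"
  have fK: "finite K" unfolding K_def by simp
  have cardK: "int (card K) = hh n" unfolding K_def using h0 by simp
  define r where "r k = (k * x) mod n" for k
  define s where "s k = (k * (1 - x)) mod n" for k
  have Kiff: "\<And>k P. {k::int. 1 \<le> k \<and> 2 * k < n \<and> P k} = {k\<in>K. P k}"
    unfolding K_def using hn by auto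
  have rs: "0 < r k \<and> r k < n \<and> 0 < s k \<and> s k < n \<and> r k \<noteq> k \<and>
            s k = (if r k < k then k - r k else k - r k + n)" if k: "k \<in> K" for k
  proof -
    have k1: "1 \<le> k" "k < n" using k hn unfolding K_def by auto
    have rnz: "r k \<noteq> 0" unfolding r_def by (rule mod_nz_k[OF cx k1])
    have snz: "s k \<noteq> 0" unfolding s_def by (rule mod_nz_k[OF cy k1])
    have r0: "0 \<le> r k" "r k < n" unfolding r_def using n by simp_all
    have s0: "0 \<le> s k" "s k < n" unfolding s_def using n by simp_all
    have sr: "s k = (k - r k) mod n" unfolding s_def r_def
      by (simp add: right_diff_distrib mod_diff_right_eq)
    have rk: "r k \<noteq> k"
    proof
      assume "r k = k"
      then have "s k = 0" using sr by simp
      then show False using snz by simp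
    qed
    have "s k = (if r k < k then k - r k else k - r k + n)"
    proof (cases "r k < k")
      case True
      then show ?thesis using sr r0 k1 by (simp add: mod_pos_pos_trivial)
    next
      case False
      have "(k - r k) mod n = (k - r k + n) mod n" using mod_add_self2[of "k - r k" n] by simp
      also have "\<dots> = k - r k + n" using r0 k1 rk False by (intro mod_pos_pos_trivial) auto
      finally have "(k - r k) mod n = k - r k + n" .
      then show ?thesis using False sr by simp
    qed
    then show ?thesis using rnz snz r0 s0 rk by auto
  qed
  have qq: "(k * x) div n + (k * (1 - x)) div n = (if r k > k then -1 else 0)" if k: "k \<in> K" for k
  proof -
    have e1: "k * x = n * ((k * x) div n) + r k" unfolding r_def by simp
    have e2: "k * (1 - x) = n * ((k * (1 - x)) div n) + s k" unfolding s_def by simp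
    have "n * ((k * x) div n + (k * (1 - x)) div n) = k - r k - s k"
      using e1 e2 by (simp add: algebra_simps)
    moreover have "k - r k - s k = n * (if r k > k then -1 else 0)" using rs[OF k] by auto
    ultimately have eqn: "n * ((k * x) div n + (k * (1 - x)) div n) = n * (if r k > k then -1 else 0)"
      by (rule trans)
    have nz: "n \<noteq> 0" using n by simp
    from eqn show ?thesis by (simp only: mult_left_cancel[OF nz])
  qed
  define C1 where "C1 = {k\<in>K. r k > k}"
  define A where "A = {k\<in>K. 2 * r k > n}"
  define B where "B = {k\<in>K. 2 * s k > n}"
  have fA: "finite A" "finite B" "finite C1" unfolding A_def B_def C1_def using fK by simp_all
  have pw: "(r k > k \<longleftrightarrow> (2 * r k > n \<or> 2 * s k > n)) \<and> ((2 * r k < n \<and> 2 * s k < n) \<longleftrightarrow> \<not> r k > k)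
     \<and> (n > 2 * s k \<longleftrightarrow> \<not> 2 * s k > n) \<and> (2 * r k > n \<longleftrightarrow> r k > hh n) \<and> (2 * s k > n \<longleftrightarrow> s k > hh n)"
    if k: "k \<in> K" for k
  proof -
    have kb: "1 \<le> k" "k \<le> hh n" using k unfolding K_def by auto
    have R: "0 < r k" "r k < n" "0 < s k" "s k < n" "r k \<noteq> k"
      "s k = (if r k < k then k - r k else k - r k + n)" using rs[OF k] by auto
    have np: "2 * r k \<noteq> n" "2 * s k \<noteq> n" using n(2) by auto
    show ?thesis
    proof (cases "r k < k")
      case True
      then have "s k = k - r k" using R by simp
      then show ?thesis using True R(1-5) kb hn np by (auto; linarith)
    next
      case False
      then have "s k = k - r k + n" using R by simp
      then show ?thesis using False R(1-5) kb hn np by (auto; linarith)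
    qed
  qed
  have C1AB: "C1 = A \<union> B"
    unfolding C1_def A_def B_def using pw by auto
  have S1: "{k::int. 1 \<le> k \<and> 2 * k < n \<and> lres n (k * x) > k} = C1"
    unfolding Kiff C1_def r_def lres_def ..
  have S2: "{k::int. 1 \<le> k \<and> 2 * k < n \<and> 2 * lres n (k * x) > n \<and> 2 * lres n (k * (1 - x)) > n} = A \<inter> B"
    unfolding Kiff A_def B_def r_def s_def lres_def by auto
  have S3: "{k::int. 1 \<le> k \<and> 2 * k < n \<and> 2 * lres n (k * x) < n \<and> 2 * lres n (k * (1 - x)) < n} = K - C1"
  proof -
    have "{k::int. 1 \<le> k \<and> 2 * k < n \<and> 2 * lres n (k * x) < n \<and> 2 * lres n (k * (1 - x)) < n}
        = {k\<in>K. 2 * r k < n \<and> 2 * s k < n}"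
      unfolding Kiff r_def s_def lres_def ..
    also have "\<dots> = K - C1" unfolding C1_def using pw by auto
    finally show ?thesis .
  qed
  have S4: "{k::int. 1 \<le> k \<and> 2 * k < n \<and> 2 * lres n (k * x) > n \<and> n > 2 * lres n (k * (1 - x))} = A - B"
  proof -
    have "{k::int. 1 \<le> k \<and> 2 * k < n \<and> 2 * lres n (k * x) > n \<and> n > 2 * lres n (k * (1 - x))}
        = {k\<in>K. 2 * r k > n \<and> n > 2 * s k}"
      unfolding Kiff r_def s_def lres_def ..
    also have "\<dots> = A - B" unfolding A_def B_def using pw by auto
    finally show ?thesis .
  qed
  have muA: "mu n x = card A"
  proof -
    have "{k\<in>{1..hh n}. k * x mod n > hh n} = A" unfolding A_def using pw unfolding K_def r_def by auto
    then show ?thesis unfolding mu_def by simp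
  qed
  have muB: "mu n (1 - x) = card B"
  proof -
    have "{k\<in>{1..hh n}. k * (1 - x) mod n > hh n} = B" unfolding B_def using pw unfolding K_def s_def by auto
    then show ?thesis unfolding mu_def by simp
  qed
  have sumq: "FF n x + FF n (1 - x) = - int (card C1)"
  proof -
    have "FF n x + FF n (1 - x) = (\<Sum>k\<in>K. (k * x) div n + (k * (1 - x)) div n)"
      unfolding FF_def K_def by (simp add: sum.distrib)
    also have "\<dots> = (\<Sum>k\<in>K. (if r k > k then -1 else 0))"
      by (intro sum.cong refl) (rule qq)
    also have "\<dots> = (\<Sum>k\<in>C1. -1)"
      unfolding C1_def using sum.inter_filter[OF fK, of "\<lambda>_. (-1::int)" "\<lambda>k. r k > k"] by simp
    also have "\<dots> = - int (card C1)" by simp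
    finally show ?thesis .
  qed
  have e1: "even (int (mu n x) + FF n x + (x - 1) * TT n)" by (rule eisenstein[OF n' cx])
  have e2: "even (int (mu n (1 - x)) + FF n (1 - x) + ((1 - x) - 1) * TT n)" by (rule eisenstein[OF n' cy])
  have e3: "even (int (mu n 2) + FF n 2 + (2 - 1) * TT n)" by (rule eisenstein[OF n' c2])
  have f2: "FF n 2 = 0" by (rule FF_2[OF n'])
  have tt: "(x - 1) * TT n + ((1 - x) - 1) * TT n + (2 - 1) * TT n = 0" by (simp add: algebra_simps)
  have ev: "even ((int (mu n x) + int (mu n (1 - x)) + int (mu n 2)) - int (card C1))"
  proof -
    from e1 obtain u where u: "int (mu n x) + FF n x + (x - 1) * TT n = 2 * u" by (rule evenE)
    from e2 obtain v where v: "int (mu n (1 - x)) + FF n (1 - x) + ((1 - x) - 1) * TT n = 2 * v" by (rule evenE)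
    from e3 obtain w where w: "int (mu n 2) + FF n 2 + (2 - 1) * TT n = 2 * w" by (rule evenE)
    have "(int (mu n x) + int (mu n (1 - x)) + int (mu n 2)) - int (card C1) = 2 * (u + v + w)"
      using u v w tt f2 sumq by (smt (verit))
    then show ?thesis by simp
  qed
  have GC1: "G n 2 * G n x * G n (1 - x) = sg (int (card C1))"
    unfolding G_sg sg_add using sg_cong[OF ev] by (simp add: add.commute add.left_commute)
  have c2x: "coprime (2 * x) n" using c2 cx by simp
  have c2xy: "coprime (2 * x * (1 - x)) n" using c2x cy by simp
  have Gprod: "G n (2 * x * (1 - x)) = G n 2 * G n x * G n (1 - x)"
    using G_mult[OF n' c2x cy] G_mult[OF n' c2 cx] by simp
  have cAB: "int (card C1) + int (card (A \<inter> B)) = int (card A) + int (card B)"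
    unfolding C1AB using card_Un_Int[OF fA(1) fA(2)] by simp
  have J1: "(-1::int) ^ card C1 = Jacobi (2 * x * (1 - x)) n"
    unfolding pow_sg using GC1 Gprod G_Jacobi[OF n' c2xy] by simp
  have J2: "(-1::int) ^ card (A \<inter> B) = Jacobi 2 n"
  proof -
    have "int (card (A \<inter> B)) = int (card A) + int (card B) - int (card C1)" using cAB by simp
    then have "sg (int (card (A \<inter> B))) = sg (int (card A)) * sg (int (card B)) * sg (int (card C1))"
      by (simp add: sg_add sg_diff)
    also have "\<dots> = G n x * G n (1 - x) * (G n 2 * G n x * G n (1 - x))"
    proof -
      have GC1': "sg (int (card C1)) = sg (int (mu n 2)) * sg (int (card A)) * sg (int (card B))"
        using GC1 unfolding G_sg muA muB by simp
      show ?thesis unfolding G_sg muA muB GC1' by simp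
    qed
    also have "\<dots> = G n 2 * (G n x * G n x) * (G n (1 - x) * G n (1 - x))" by (simp add: algebra_simps)
    also have "\<dots> = G n 2" by (simp add: G_sq)
    finally show ?thesis unfolding pow_sg using G_Jacobi[OF n' c2] by simp
  qed
  have J3: "(-1::int) ^ card (K - C1) = Jacobi (2 * x * (x - 1)) n"
  proof -
    have sub: "C1 \<subseteq> K" unfolding C1_def by auto
    have "int (card (K - C1)) = hh n - int (card C1)"
      using card_Diff_subset[OF fA(3) sub] card_mono[OF fK sub] cardK by simp
    then have "sg (int (card (K - C1))) = sg (hh n) * sg (int (card C1))" by (simp add: sg_diff)
    also have "\<dots> = G n (-1) * G n (2 * x * (1 - x))" using G_minus1[OF n'] GC1 Gprod by simp
    also have "\<dots> = G n (-1 * (2 * x * (1 - x)))" using G_mult[OF n' cm c2xy] by simp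
    also have "-1 * (2 * x * (1 - x)) = 2 * x * (x - 1)" by (simp add: algebra_simps)
    finally have "sg (int (card (K - C1))) = G n (2 * x * (x - 1))" .
    moreover have "coprime (2 * x * (x - 1)) n"
    proof -
      have "coprime (x - 1) n" using cy by (metis coprime_minus_left_iff minus_diff_eq)
      then show ?thesis using c2x by simp
    qed
    ultimately show ?thesis unfolding pow_sg using G_Jacobi[OF n'] by simp
  qed
  have J4: "(-1::int) ^ card (A - B) = Jacobi (2 * x) n"
  proof -
    have "int (card (A - B)) = int (card A) - int (card (A \<inter> B))"
      using card_Diff_subset_Int[of A B] fA card_mono[OF fA(1), of "A \<inter> B"] by auto
    then have "sg (int (card (A - B))) = sg (int (card A)) * sg (int (card (A \<inter> B)))" by (simp add: sg_diff)
    also have "\<dots> = G n x * G n 2" using J2 G_Jacobi[OF n' c2] unfolding pow_sg G_sg muA by simp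
    also have "\<dots> = G n (2 * x)" using G_mult[OF n' c2 cx] by simp
    finally show ?thesis unfolding pow_sg using G_Jacobi[OF n' c2x] by simp
  qed
  show ?thesis unfolding S1 S2 S3 S4 using J1 J2 J3 J4 by blast
qed


theorem theorem1p1:
  fixes n x :: int
  assumes "n > 0" and "odd n" and "gcd (x * (1 - x)) n = 1"
  shows "((-1::int) ^ card {k::int. 1 \<le> k \<and> 2 * k < n \<and> lres n (k * x) > k}
           = Jacobi (2 * x * (1 - x)) n) \<and>
         ((-1::int) ^ card {k::int. 1 \<le> k \<and> 2 * k < n \<and>
             2 * lres n (k * x) > n \<and> 2 * lres n (k * (1 - x)) > n}
           = Jacobi 2 n) \<and>
         ((-1::int) ^ card {k::int. 1 \<le> k \<and> 2 * k < n \<and>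
             2 * lres n (k * x) < n \<and> 2 * lres n (k * (1 - x)) < n}
           = Jacobi (2 * x * (x - 1)) n) \<and>
         ((-1::int) ^ card {k::int. 1 \<le> k \<and> 2 * k < n \<and>
             2 * lres n (k * x) > n \<and> n > 2 * lres n (k * (1 - x))}
           = Jacobi (2 * x) n)"
    by (rule main[OF assms])

end
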